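(* Let $\varepsilon>0$ and let $\mathbb{F}$ be a field with $|\mathbb{F}|\ge n^2$. There exists a polynomial map $P : \mathbb{F}^{\lfloor 4 \varepsilon n^2\rfloor} \to \mathbb{F}^{n \times n}$, each of whose coordinates is a polynomial of degree at most $n^2$, such that every matrix $M\in\mathbb{F}^{n\times n}$ which is not $(\varepsilon n, \varepsilon n^2)$-rigid lies in the image of $P$.
   Context: A matrix $M\in\mathbb{F}^{n\times n}$ is $(r,s)$-rigid if $M$ cannot be written as $M=R+S$ with $\mathrm{rank}(R)\le r$ and $S$ having at most $s$ non-zero entries. *)

theory Defs
  imports "Jordan_Normal_Form.DL_Rank"
begin

definition rigid :: "nat \<Rightarrow> real \<Rightarrow> real \<Rightarrow> 'a::field mat \<Rightarrow> bool" where
  "rigid n r s M \<longleftrightarrow>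
     \<not> (\<exists>R S. R \<in> carrier_mat n n \<and> S \<in> carrier_mat n n \<and> M = R + S \<and>
            real (vec_space.rank n R) \<le> r \<and>
            real (card {(i,j). i < n \<and> j < n \<and> S $$ (i,j) \<noteq> 0}) \<le> s)"

definition is_poly_fun :: "nat \<Rightarrow> nat \<Rightarrow> ('a::comm_ring_1 vec \<Rightarrow> 'a) \<Rightarrow> bool" where
  "is_poly_fun m d f \<longleftrightarrow>
     (\<exists>(S :: (nat \<Rightarrow> nat) set) (c :: (nat \<Rightarrow> nat) \<Rightarrow> 'a).
        finite S \<and>
        (\<forall>\<alpha>\<in>S. (\<forall>i. m \<le> i \<longrightarrow> \<alpha> i = 0) \<and> (\<Sum>i<m. \<alpha> i) \<le> d) \<and>
        (\<forall>x\<in>carrier_vec m. f x = (\<Sum>\<alpha>\<in>S. c \<alpha> * (\<Prod>i<m. (x $ i) ^ \<alpha> i))))"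

end

theory Submission
  imports Defs
begin


abbreviation mono_v :: "nat \<Rightarrow> (nat \<Rightarrow> nat) \<Rightarrow> 'a::comm_ring_1 vec \<Rightarrow> 'a" where
  "mono_v m \<alpha> x \<equiv> (\<Prod>i<m. (x $ i) ^ \<alpha> i)"

lemma poly_mono: "is_poly_fun m d f \<Longrightarrow> d \<le> d' \<Longrightarrow> is_poly_fun m d' f"
  unfolding is_poly_fun_def by (meson order_trans)

lemma poly_const: "is_poly_fun m d (\<lambda>x. c)"
  unfolding is_poly_fun_def
  by (rule exI[of _ "{\<lambda>_. 0}"], rule exI[of _ "\<lambda>_. c"], auto)

lemma poly_var: assumes "i < m" "1 \<le> d" shows "is_poly_fun m d (\<lambda>x. x $ i)"
proof -
  let ?a = "\<lambda>j. if j = i then 1 else (0::nat)"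
  have s: "(\<Sum>j<m. ?a j) = 1" using assms by (simp add: sum.delta)
  have p: "(\<Prod>j<m. (x $ j) ^ ?a j) = x $ i" for x :: "'a vec"
  proof -
    have "(\<Prod>j<m. (x $ j) ^ ?a j) = (\<Prod>j<m. if j = i then x $ j else 1)"
      by (rule prod.cong) auto
    also have "\<dots> = x $ i" using assms by (simp add: prod.delta)
    finally show ?thesis .
  qed
  show ?thesis unfolding is_poly_fun_def
    by (rule exI[of _ "{?a}"], rule exI[of _ "\<lambda>_. 1"]) (use assms s p in auto)
qed

lemma poly_add: assumes "is_poly_fun m d f" "is_poly_fun m d g"
  shows "is_poly_fun m d (\<lambda>x. f x + g x)"
proof -
  obtain S1 c1 where 1: "finite S1" "\<forall>\<alpha>\<in>S1. (\<forall>i. m \<le> i \<longrightarrow> \<alpha> i = 0) \<and> (\<Sum>i<m. \<alpha> i) \<le> d"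
    "\<forall>x\<in>carrier_vec m. f x = (\<Sum>\<alpha>\<in>S1. c1 \<alpha> * mono_v m \<alpha> x)"
    using assms(1) unfolding is_poly_fun_def by blast
  obtain S2 c2 where 2: "finite S2" "\<forall>\<alpha>\<in>S2. (\<forall>i. m \<le> i \<longrightarrow> \<alpha> i = 0) \<and> (\<Sum>i<m. \<alpha> i) \<le> d"
    "\<forall>x\<in>carrier_vec m. g x = (\<Sum>\<alpha>\<in>S2. c2 \<alpha> * mono_v m \<alpha> x)"
    using assms(2) unfolding is_poly_fun_def by blast
  define c where "c = (\<lambda>\<alpha>. (if \<alpha> \<in> S1 then c1 \<alpha> else 0) + (if \<alpha> \<in> S2 then c2 \<alpha> else 0))"
  have "f x + g x = (\<Sum>\<alpha>\<in>S1 \<union> S2. c \<alpha> * mono_v m \<alpha> x)" if "x \<in> carrier_vec m" for x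
  proof -
    have "(\<Sum>\<alpha>\<in>S1 \<union> S2. c \<alpha> * mono_v m \<alpha> x) =
       (\<Sum>\<alpha>\<in>S1 \<union> S2. (if \<alpha> \<in> S1 then c1 \<alpha> * mono_v m \<alpha> x else 0)) +
       (\<Sum>\<alpha>\<in>S1 \<union> S2. (if \<alpha> \<in> S2 then c2 \<alpha> * mono_v m \<alpha> x else 0))"
      unfolding c_def sum.distrib[symmetric] by (rule sum.cong) (auto simp: distrib_right)
    also have "\<dots> = (\<Sum>\<alpha>\<in>S1. c1 \<alpha> * mono_v m \<alpha> x) + (\<Sum>\<alpha>\<in>S2. c2 \<alpha> * mono_v m \<alpha> x)"
      using 1(1) 2(1) by (simp add: sum.inter_restrict[symmetric] Int_absorb1 Int_absorb2)
    finally show ?thesis using 1(3) 2(3) that by simp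
  qed
  then show ?thesis unfolding is_poly_fun_def
    by (intro exI[of _ "S1 \<union> S2"] exI[of _ c]) (use 1 2 in auto)
qed

lemma poly_mult: assumes "is_poly_fun m d1 f" "is_poly_fun m d2 g"
  shows "is_poly_fun m (d1 + d2) (\<lambda>x. f x * g x)"
proof -
  obtain S1 c1 where 1: "finite S1" "\<forall>\<alpha>\<in>S1. (\<forall>i. m \<le> i \<longrightarrow> \<alpha> i = 0) \<and> (\<Sum>i<m. \<alpha> i) \<le> d1"
    "\<forall>x\<in>carrier_vec m. f x = (\<Sum>\<alpha>\<in>S1. c1 \<alpha> * mono_v m \<alpha> x)"
    using assms(1) unfolding is_poly_fun_def by blast
  obtain S2 c2 where 2: "finite S2" "\<forall>\<alpha>\<in>S2. (\<forall>i. m \<le> i \<longrightarrow> \<alpha> i = 0) \<and> (\<Sum>i<m. \<alpha> i) \<le> d2"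
    "\<forall>x\<in>carrier_vec m. g x = (\<Sum>\<alpha>\<in>S2. c2 \<alpha> * mono_v m \<alpha> x)"
    using assms(2) unfolding is_poly_fun_def by blast
  define h where "h = (\<lambda>p::(nat\<Rightarrow>nat)\<times>(nat\<Rightarrow>nat). (\<lambda>i. fst p i + snd p i))"
  define T where "T = h ` (S1 \<times> S2)"
  define c where "c = (\<lambda>\<gamma>. \<Sum>p\<in>{p\<in>S1 \<times> S2. h p = \<gamma>}. c1 (fst p) * c2 (snd p))"
  have fin: "finite (S1 \<times> S2)" using 1(1) 2(1) by simp
  have mh: "mono_v m (h p) x = mono_v m (fst p) x * mono_v m (snd p) x" for p and x :: "'a vec"
    unfolding h_def by (simp add: power_add prod.distrib)
  have "f x * g x = (\<Sum>\<gamma>\<in>T. c \<gamma> * mono_v m \<gamma> x)" if "x \<in> carrier_vec m" for x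
  proof -
    have "f x * g x = (\<Sum>\<alpha>\<in>S1. \<Sum>\<beta>\<in>S2. (c1 \<alpha> * mono_v m \<alpha> x) * (c2 \<beta> * mono_v m \<beta> x))"
      using 1(3) 2(3) that by (simp add: sum_product)
    also have "\<dots> = (\<Sum>p\<in>S1 \<times> S2. c1 (fst p) * c2 (snd p) * mono_v m (h p) x)"
      unfolding sum.cartesian_product mh by (rule sum.cong) (auto simp: ac_simps)
    also have "\<dots> = (\<Sum>\<gamma>\<in>T. \<Sum>p\<in>{p\<in>S1 \<times> S2. h p = \<gamma>}. c1 (fst p) * c2 (snd p) * mono_v m (h p) x)"
      unfolding T_def by (rule sum.image_gen[OF fin])
    also have "\<dots> = (\<Sum>\<gamma>\<in>T. c \<gamma> * mono_v m \<gamma> x)"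
      unfolding c_def sum_distrib_right by (rule sum.cong, simp, rule sum.cong) auto
    finally show ?thesis .
  qed
  moreover have "\<forall>\<gamma>\<in>T. (\<forall>i. m \<le> i \<longrightarrow> \<gamma> i = 0) \<and> (\<Sum>i<m. \<gamma> i) \<le> d1 + d2"
  proof
    fix \<gamma> assume "\<gamma> \<in> T"
    then obtain a b where ab: "a \<in> S1" "b \<in> S2" "\<gamma> = h (a, b)" unfolding T_def by auto
    then show "(\<forall>i. m \<le> i \<longrightarrow> \<gamma> i = 0) \<and> (\<Sum>i<m. \<gamma> i) \<le> d1 + d2"
      using 1(2) 2(2) unfolding h_def by (auto simp: sum.distrib add_mono)
  qed
  ultimately show ?thesis unfolding is_poly_fun_def
    by (intro exI[of _ T] exI[of _ c]) (use fin T_def in auto)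
qed

lemma poly_sum: assumes "finite I" "\<And>t. t \<in> I \<Longrightarrow> is_poly_fun m d (f t)"
  shows "is_poly_fun m d (\<lambda>x. \<Sum>t\<in>I. f t x)"
  using assms by (induction I rule: finite_induct) (auto intro: poly_add poly_const)

lemma poly_prod: assumes "finite I" "\<And>t. t \<in> I \<Longrightarrow> is_poly_fun m (d t) (f t)"
  shows "is_poly_fun m (\<Sum>t\<in>I. d t) (\<lambda>x. \<Prod>t\<in>I. f t x)"
  using assms by (induction I rule: finite_induct) (auto intro: poly_mult poly_const)



lemma rank_factor:
  fixes R :: "'a::field mat"
  assumes R: "R \<in> carrier_mat n n" and rk: "vec_space.rank n R \<le> k"
  shows "\<exists>U V. \<forall>i<n. \<forall>j<n. R $$ (i,j) = (\<Sum>l<k. U i l * V l j)"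
proof -
  interpret vec_space "TYPE('a)" n .
  have cs: "set (cols R) \<subseteq> carrier_vec n" using R cols_dim by blast
  obtain S where S1: "maximal S (\<lambda>T. T \<subseteq> set (cols R) \<and> lin_indpt T)"
    using maximal_exists[of "(\<lambda>T. T \<subseteq> set (cols R) \<and> lin_indpt T)" "card (set (cols R))" "{}"]
    by (meson List.finite_set card_mono empty_iff empty_subsetI finite_lin_indpt2 rev_finite_subset)
  have Ssub: "S \<subseteq> set (cols R)" and Sind: "lin_indpt S" using S1 unfolding maximal_def by auto
  have Smax: "\<And>B. S \<subseteq> B \<Longrightarrow> B \<subseteq> set (cols R) \<Longrightarrow> lin_indpt B \<Longrightarrow> B = S"
    using S1 unfolding maximal_def by blast
  have S: "maximal S (\<lambda>T. T \<subseteq> set (cols R) \<and> lin_indpt T)" "finite S"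
    using S1 Ssub finite_subset by auto
  have SV: "S \<subseteq> carrier_vec n" using Ssub cs by blast
  have cardS: "card S \<le> k" using rank_card_indpt[OF R S(1)] rk by simp
  have inspan: "col R j \<in> span S" if j: "j < n" for j
  proof (rule ccontr)
    assume ns: "col R j \<notin> span S"
    have cin: "col R j \<in> set (cols R)" using j R by (simp add: cols_def)
    have cV: "col R j \<in> carrier_vec n" using cin cs by blast
    have "col R j \<notin> S" using ns span_mem[OF SV] by blast
    then have li: "lin_indpt (S \<union> {col R j})"
      using lin_dep_iff_in_span[OF SV Sind, of "col R j"] cV ns by auto
    have "S \<union> {col R j} = S" by (rule Smax[OF _ _ li]) (use cin Ssub in auto)
    then show False using \<open>col R j \<notin> S\<close> by blast
  qed
  have ex: "\<forall>j. \<exists>a. j < n \<longrightarrow> (\<forall>i<n. R $$ (i,j) = (\<Sum>v\<in>S. a v * v $ i))"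
  proof
    fix j show "\<exists>a. j < n \<longrightarrow> (\<forall>i<n. R $$ (i,j) = (\<Sum>v\<in>S. a v * v $ i))"
    proof (cases "j < n")
      case True
      obtain a A where aA: "col R j = lincomb a A" "finite A" "A \<subseteq> S"
        using in_spanE[OF inspan[OF True]] by blast
      have AV: "A \<subseteq> carrier_vec n" using aA(3) SV by blast
      have rr: "R $$ (i,j) = (\<Sum>v\<in>S. (if v \<in> A then a v else 0) * v $ i)" if i: "i < n" for i
      proof -
        have "R $$ (i,j) = col R j $ i" using i True R by simp
        also have "\<dots> = (\<Sum>v\<in>A. a v * v $ i)" unfolding aA(1) by (rule lincomb_index[OF i AV])
        also have "\<dots> = (\<Sum>v\<in>S. (if v \<in> A then a v else 0) * v $ i)"
          using S(2) aA(3) by (intro sum.mono_neutral_cong_left) auto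
        finally show ?thesis .
      qed
      show ?thesis by (rule exI[of _ "\<lambda>v. if v \<in> A then a v else 0"]) (use rr in simp)
    qed simp
  qed
  obtain a where a0: "\<forall>j. j < n \<longrightarrow> (\<forall>i<n. R $$ (i,j) = (\<Sum>v\<in>S. a j v * v $ i))"
    using choice[OF ex] by blast
  have a: "\<And>j i. j < n \<Longrightarrow> i < n \<Longrightarrow> R $$ (i,j) = (\<Sum>v\<in>S. a j v * v $ i)"
    using a0 by simp
  obtain g where g: "bij_betw g {0..<card S} S" using ex_bij_betw_nat_finite[OF S(2)] by blast
  define U where "U = (\<lambda>i l. if l < card S then g l $ i else 0)"
  define V where "V = (\<lambda>l j. if l < card S then a j (g l) else 0)"
  have "R $$ (i,j) = (\<Sum>l<k. U i l * V l j)" if "i < n" "j < n" for i j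
  proof -
    have "R $$ (i,j) = (\<Sum>v\<in>S. a j v * v $ i)" by (rule a[OF that(2,1)])
    also have "\<dots> = (\<Sum>l\<in>{0..<card S}. a j (g l) * g l $ i)"
      using sum.reindex_bij_betw[OF g, of "\<lambda>v. a j v * v $ i"] by simp
    also have "\<dots> = (\<Sum>l\<in>{l\<in>{..<k}. l < card S}. U i l * V l j)"
      using cardS by (intro sum.cong) (auto simp: U_def V_def mult.commute)
    also have "\<dots> = (\<Sum>l<k. U i l * V l j)"
      by (subst sum.inter_filter, simp, rule sum.cong) (auto simp: U_def V_def)
    finally show ?thesis .
  qed
  then show ?thesis by blast
qed



lemma exists_inj_points:
  assumes "infinite (UNIV :: 'a set) \<or> N \<le> card (UNIV :: 'a set)"
  shows "\<exists>e :: nat \<Rightarrow> 'a. inj_on e {..<N}"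
proof -
  obtain A :: "'a set" where A: "finite A" "card A = N"
    using assms infinite_arbitrarily_large obtain_subset_with_card_n by metis
  obtain e where "bij_betw e {0..<card A} A" using ex_bij_betw_nat_finite[OF A(1)] by blast
  then show ?thesis using A(2) by (auto simp: bij_betw_def lessThan_atLeast0)
qed

definition lag :: "(nat \<Rightarrow> 'a::field) \<Rightarrow> nat \<Rightarrow> nat \<Rightarrow> 'a \<Rightarrow> 'a" where
  "lag e N p y = (\<Prod>q\<in>{..<N}-{p}. (y - e q) * inverse (e p - e q))"

lemma lag_eq:
  assumes inj: "inj_on e {..<N}" and p: "p < N" and q: "q < N"
  shows "lag e N p (e q) = (if q = p then 1 else 0)"
proof (cases "q = p")
  case True
  have "lag e N p (e q) = (\<Prod>r\<in>{..<N}-{p}. 1)" unfolding lag_def True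
  proof (rule prod.cong)
    fix r assume r: "r \<in> {..<N}-{p}"
    then have "e p \<noteq> e r" using inj p by (auto simp: inj_on_def)
    then show "(e p - e r) * inverse (e p - e r) = 1" by simp
  qed simp
  then show ?thesis using True by simp
next
  case False
  have "lag e N p (e q) = 0" unfolding lag_def
    by (rule prod_zero) (use False q in auto)
  then show ?thesis using False by simp
qed

lemma poly_lin: assumes "u < m" shows "is_poly_fun m 1 (\<lambda>x. (x $ u - a) * b)"
proof -
  have "is_poly_fun m (1 + 0) (\<lambda>x. (x $ u + (- a)) * b)"
    by (intro poly_mult poly_add poly_var poly_const assms) auto
  then show ?thesis by simp
qed

lemma poly_lag: assumes "u < m" "p < N" shows "is_poly_fun m (N - 1) (\<lambda>x. lag e N p (x $ u))"
proof -
  have "is_poly_fun m (\<Sum>q\<in>{..<N}-{p}. 1) (\<lambda>x. \<Prod>q\<in>{..<N}-{p}. (x $ u - e q) * inverse (e p - e q))"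
    by (intro poly_prod poly_lin assms) auto
  then show ?thesis using assms unfolding lag_def by simp
qed

lemma idx1: "i < n \<Longrightarrow> l < k \<Longrightarrow> i * k + l < n * (k::nat)"
proof -
  assume "i < n" "l < k"
  then have "i * k + l < Suc i * k" by simp
  also have "\<dots> \<le> n * k" using \<open>i < n\<close> by (intro mult_right_mono) auto
  finally show ?thesis .
qed

lemma idx_div: "l < (k::nat) \<Longrightarrow> (i * k + l) div k = i"  by simp
lemma idx_mod: "l < (k::nat) \<Longrightarrow> (i * k + l) mod k = l"  by simp



theorem lemma2p2:
  fixes \<epsilon> :: real and n :: nat
  assumes "\<epsilon> > 0"
    and "infinite (UNIV :: 'a::field set) \<or> n ^ 2 \<le> card (UNIV :: 'a set)"
  shows "\<exists>P :: 'a vec \<Rightarrow> 'a mat.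
           (\<forall>x\<in>carrier_vec (nat \<lfloor>4 * \<epsilon> * real n ^ 2\<rfloor>). P x \<in> carrier_mat n n) \<and>
           (\<forall>i<n. \<forall>j<n. is_poly_fun (nat \<lfloor>4 * \<epsilon> * real n ^ 2\<rfloor>) (n ^ 2) (\<lambda>x. P x $$ (i, j))) \<and>
           (\<forall>M\<in>carrier_mat n n. \<not> rigid n (\<epsilon> * real n) (\<epsilon> * real n ^ 2) M \<longrightarrow>
              (\<exists>x\<in>carrier_vec (nat \<lfloor>4 * \<epsilon> * real n ^ 2\<rfloor>). P x = M))"
proof -
  define m where "m = nat \<lfloor>4 * \<epsilon> * real n ^ 2\<rfloor>"
  define N where "N = n ^ 2"
  show ?thesis
  proof (cases "\<epsilon> \<ge> 1/4")
    case True
    have Nm: "N \<le> m" unfolding m_def N_def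
    proof (rule le_nat_floor)
      have "1 * real n ^ 2 \<le> (4 * \<epsilon>) * real n ^ 2" by (rule mult_right_mono) (use True in auto)
      then show "real (n ^ 2) \<le> 4 * \<epsilon> * real n ^ 2" by simp
    qed
    define P where "P = (\<lambda>x::'a vec. mat n n (\<lambda>(i,j). x $ (i * n + j)))"
    have idx: "i * n + j < m" if "i < n" "j < n" for i j
      using idx1[OF that] Nm unfolding N_def by (simp add: power2_eq_square)
    have "\<forall>i<n. \<forall>j<n. is_poly_fun m N (\<lambda>x. P x $$ (i, j))"
    proof (intro allI impI)
      fix i j assume ij: "i < n" "j < n"
      have "is_poly_fun m N (\<lambda>x. x $ (i * n + j))"
        by (rule poly_var[OF idx[OF ij]]) (use ij in \<open>simp add: N_def\<close>)
      then show "is_poly_fun m N (\<lambda>x. P x $$ (i, j))" using ij by (simp add: P_def)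
    qed
    moreover have "\<exists>x\<in>carrier_vec m. P x = M" if M: "M \<in> carrier_mat n n" for M
    proof -
      define x where "x = vec m (\<lambda>p. if p < n * n then M $$ (p div n, p mod n) else 0)"
      have "P x = M"
        by (rule eq_matI) (use M idx idx1 in \<open>auto simp: P_def x_def\<close>)
      then show ?thesis unfolding x_def by auto
    qed
    ultimately show ?thesis unfolding m_def[symmetric] N_def[symmetric] by (intro exI[of _ P]) (auto simp: P_def)
  next
    case False
    define k where "k = nat \<lfloor>\<epsilon> * real n\<rfloor>"
    define s where "s = nat \<lfloor>\<epsilon> * real n ^ 2\<rfloor>"
    have kr: "real k \<le> \<epsilon> * real n" unfolding k_def using assms(1) by (intro of_nat_floor) simp
    have sr: "real s \<le> \<epsilon> * real n ^ 2" unfolding s_def using assms(1) by (intro of_nat_floor) simp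
    have ksm: "2 * n * k + 2 * s \<le> m" unfolding m_def
    proof (rule le_nat_floor)
      have "real n * real k \<le> real n * (\<epsilon> * real n)" using kr by (intro mult_left_mono) auto
      then show "real (2 * n * k + 2 * s) \<le> 4 * \<epsilon> * real n ^ 2"
        using sr by (simp add: power2_eq_square algebra_simps)
    qed
    obtain e :: "nat \<Rightarrow> 'a" where inj: "inj_on e {..<N}"
      using exists_inj_points[OF assms(2)[folded N_def]] by blast
    define P where "P = (\<lambda>x::'a vec. mat n n (\<lambda>(i,j).
       (\<Sum>l<k. x $ (i * k + l) * x $ (n * k + (l * n + j))) +
       (\<Sum>t<s. x $ (2 * n * k + s + t) * lag e N (i * n + j) (x $ (2 * n * k + t)))))"
    have "\<forall>i<n. \<forall>j<n. is_poly_fun m N (\<lambda>x. P x $$ (i, j))"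
    proof (intro allI impI)
      fix i j assume ij: "i < n" "j < n"
      have N1: "1 \<le> N" using ij by (simp add: N_def)
      have "is_poly_fun m N (\<lambda>x. (\<Sum>l<k. x $ (i * k + l) * x $ (n * k + (l * n + j))))"
      proof (rule poly_sum)
        fix l assume "l \<in> {..<k}"
        then have l: "l < k" by simp
        have "1 \<le> \<epsilon> * real n" using kr l by linarith
        moreover have "\<epsilon> * real n \<le> (1/4) * real n" by (rule mult_right_mono) (use False in auto)
        ultimately have "4 \<le> real n" by linarith
        then have "2 \<le> n" by simp
        then have "2 \<le> N" unfolding N_def power2_eq_square using le_square[of n] by linarith
        have a: "i * k + l < m" using idx1[OF ij(1) l] ksm by linarith
        have b: "n * k + (l * n + j) < m" using idx1[OF l ij(2)] ksm mult.commute[of k n] by linarith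
        have "is_poly_fun m (1 + 1) (\<lambda>x. x $ (i * k + l) * x $ (n * k + (l * n + j)))"
          by (intro poly_mult poly_var a b) auto
        then show "is_poly_fun m N (\<lambda>x. x $ (i * k + l) * x $ (n * k + (l * n + j)))"
          by (rule poly_mono) (use \<open>2 \<le> N\<close> in simp)
      qed simp
      moreover have "is_poly_fun m N (\<lambda>x. (\<Sum>t<s. x $ (2 * n * k + s + t) * lag e N (i * n + j) (x $ (2 * n * k + t))))"
      proof (rule poly_sum)
        fix t assume "t \<in> {..<s}"
        then have a: "2 * n * k + s + t < m" "2 * n * k + t < m" using ksm by auto
        have p: "i * n + j < N" using idx1[OF ij] by (simp add: N_def power2_eq_square)
        have "is_poly_fun m (1 + (N - 1)) (\<lambda>x. x $ (2 * n * k + s + t) * lag e N (i * n + j) (x $ (2 * n * k + t)))"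
          by (intro poly_mult poly_var poly_lag a p) auto
        then show "is_poly_fun m N (\<lambda>x. x $ (2 * n * k + s + t) * lag e N (i * n + j) (x $ (2 * n * k + t)))"
          using N1 by simp
      qed simp
      ultimately have "is_poly_fun m N (\<lambda>x. (\<Sum>l<k. x $ (i * k + l) * x $ (n * k + (l * n + j))) +
         (\<Sum>t<s. x $ (2 * n * k + s + t) * lag e N (i * n + j) (x $ (2 * n * k + t))))"
        by (rule poly_add)
      then show "is_poly_fun m N (\<lambda>x. P x $$ (i, j))" using ij by (simp add: P_def)
    qed
    moreover have "\<exists>x\<in>carrier_vec m. P x = M"
      if M: "M \<in> carrier_mat n n" and nr: "\<not> rigid n (\<epsilon> * real n) (\<epsilon> * real n ^ 2) M" for M
    proof -
      obtain R S where RS: "R \<in> carrier_mat n n" "S \<in> carrier_mat n n" "M = R + S"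
        "real (vec_space.rank n R) \<le> \<epsilon> * real n"
        "real (card {(i,j). i < n \<and> j < n \<and> S $$ (i,j) \<noteq> 0}) \<le> \<epsilon> * real n ^ 2"
        using nr unfolding rigid_def by blast
      define Z where "Z = {(i,j). i < n \<and> j < n \<and> S $$ (i,j) \<noteq> 0}"
      have rk: "vec_space.rank n R \<le> k" unfolding k_def by (rule le_nat_floor) (use RS in simp)
      have cZ: "card Z \<le> s" unfolding s_def Z_def by (rule le_nat_floor) (use RS in simp)
      have fZ: "finite Z" unfolding Z_def
        by (rule finite_subset[of _ "{..<n} \<times> {..<n}"]) auto
      obtain U V where UV: "\<And>i j. i < n \<Longrightarrow> j < n \<Longrightarrow> R $$ (i,j) = (\<Sum>l<k. U i l * V l j)"
        using rank_factor[OF RS(1) rk] by blast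
      obtain z where z: "bij_betw z {0..<card Z} Z" using ex_bij_betw_nat_finite[OF fZ] by blast
      define x where "x = vec m (\<lambda>p.
        if p < n * k then U (p div k) (p mod k)
        else if p < 2 * n * k then V ((p - n * k) div n) ((p - n * k) mod n)
        else if p < 2 * n * k + s then
          (if p - 2 * n * k < card Z then e (fst (z (p - 2 * n * k)) * n + snd (z (p - 2 * n * k))) else 0)
        else if p < 2 * n * k + 2 * s then
          (if p - 2 * n * k - s < card Z then S $$ z (p - 2 * n * k - s) else 0)
        else 0)"
      have "P x $$ (i, j) = M $$ (i, j)" if ij: "i < n" "j < n" for i j
      proof -
        have p: "i * n + j < N" using idx1[OF ij] by (simp add: N_def power2_eq_square)
        have s1: "(\<Sum>l<k. x $ (i * k + l) * x $ (n * k + (l * n + j))) = R $$ (i,j)"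
        proof -
          have "x $ (i * k + l) * x $ (n * k + (l * n + j)) = U i l * V l j" if l: "l < k" for l
          proof -
            have a: "i * k + l < m" using idx1[OF ij(1) l] ksm by linarith
            have b: "n * k + (l * n + j) < m" using idx1[OF l ij(2)] ksm mult.commute[of k n] by linarith
            have c: "l * n + j < k * n" using idx1[OF l ij(2)] .
            show ?thesis unfolding x_def using a b c idx1[OF ij(1) l] l ij
              by (simp add: algebra_simps)
          qed
          then show ?thesis using UV[OF ij] by simp
        qed
        have s2: "(\<Sum>t<s. x $ (2 * n * k + s + t) * lag e N (i * n + j) (x $ (2 * n * k + t))) = S $$ (i,j)"
        proof -
          have "(\<Sum>t<s. x $ (2 * n * k + s + t) * lag e N (i * n + j) (x $ (2 * n * k + t)))
             = (\<Sum>t<s. if t < card Z then (if z t = (i,j) then S $$ z t else 0) else 0)"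
          proof (rule sum.cong)
            fix t assume "t \<in> {..<s}"
            then have t: "t < s" by simp
            have a: "2 * n * k + s + t < m" "2 * n * k + t < m" using ksm t by auto
            show "x $ (2 * n * k + s + t) * lag e N (i * n + j) (x $ (2 * n * k + t)) =
               (if t < card Z then (if z t = (i,j) then S $$ z t else 0) else 0)"
            proof (cases "t < card Z")
              case True
              obtain a b where zt: "z t = (a, b)" "a < n" "b < n"
                using bij_betw_apply[OF z, of t] True unfolding Z_def by auto
              have q: "a * n + b < N" using idx1[OF zt(2,3)] by (simp add: N_def power2_eq_square)
              have eqv: "(a * n + b = i * n + j) = ((a, b) = (i, j))"
              proof
                assume h: "a * n + b = i * n + j"
                have "a = i" using arg_cong[OF h, of "\<lambda>u. u div n"] zt ij by simp
                moreover have "b = j" using arg_cong[OF h, of "\<lambda>u. u mod n"] zt ij by simp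
                ultimately show "(a, b) = (i, j)" by simp
              qed simp
              show ?thesis unfolding x_def using a True t lag_eq[OF inj p q] zt eqv
                by (auto simp: algebra_simps)
            next
              case False
              show ?thesis unfolding x_def using a False t by auto
            qed
          qed simp
          also have "\<dots> = (\<Sum>t\<in>{0..<card Z}. (if z t = (i,j) then S $$ z t else 0))"
            using cZ by (subst sum.inter_filter[symmetric]) (auto intro!: sum.cong)
          also have "\<dots> = (\<Sum>q\<in>Z. (if q = (i,j) then S $$ q else 0))"
            using sum.reindex_bij_betw[OF z, of "\<lambda>q. if q = (i,j) then S $$ q else 0"] by simp
          also have "\<dots> = (if (i,j) \<in> Z then S $$ (i,j) else 0)"
            using fZ by (simp add: sum.delta')
          also have "\<dots> = S $$ (i,j)" unfolding Z_def using ij by auto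
          finally show ?thesis .
        qed
        show ?thesis using ij RS(1,2,3) s1 s2 by (simp add: P_def)
      qed
      then have "P x = M" using M by (intro eq_matI) (auto simp: P_def)
      then show ?thesis unfolding x_def by auto
    qed
    ultimately show ?thesis unfolding m_def[symmetric] N_def[symmetric] by (intro exI[of _ P]) (auto simp: P_def)
  qed
qed


end
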